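(* Let $\mathrm{X}$ be a compact Hausdorff space and $g_0,f\in C(\mathrm{X})_+^{-1}$. Then $$\lim_{n\to\infty}\Big(\big\|(ng_0^{-1}+f^{-1})^{-1}\big\|^{-1}-n\|g_0\|^{-1}\Big)^{-1}=\max\{f(x): x\in\operatorname{pk}(g_0)\}.$$
   Context: $C(\mathrm{X})_+^{-1}$ is the set of strictly positive continuous functions on $\mathrm{X}$, with sup-norm $\|\cdot\|$; $h^{-1}=1/h$ pointwise; $\operatorname{pk}(g)=\{x\in\mathrm{X}: g(x)=\|g\|\}$. *)

theory Defs
  imports "HOL-Analysis.Analysis"
begin

definition supnorm :: "('a \<Rightarrow> real) \<Rightarrow> real" where
  "supnorm g = (SUP x. \<bar>g x\<bar>)"

definition pk :: "('a \<Rightarrow> real) \<Rightarrow> 'a set" where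
  "pk g = {x. g x = supnorm g}"

end

theory Submission
  imports Defs
begin

theorem mainTheorem15:
  fixes g0 f :: "'a::t2_space \<Rightarrow> real"
  assumes "compact (UNIV :: 'a set)"
    and "continuous_on UNIV g0" and "\<And>x. g0 x > 0"
    and "continuous_on UNIV f" and "\<And>x. f x > 0"
  shows "(\<lambda>n::nat. inverse (inverse (supnorm (\<lambda>x. inverse (real n * inverse (g0 x) + inverse (f x))))
                 - real n * inverse (supnorm g0)))
         \<longlonglongrightarrow> Sup (f ` pk g0)"
proof -
  note cpt = assms(1) and g0c = assms(2) and g0p = assms(3) and fc = assms(4) and fp = assms(5)
  obtain s where s: "\<And>y. g0 y \<le> g0 s"
    using continuous_attains_sup[OF cpt _ g0c] by auto
  define M where "M = g0 s"
  have Mpos: "M > 0" using g0p M_def by auto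
  have snM: "supnorm g0 = M"
    unfolding supnorm_def M_def
    by (rule cSup_eq_maximum) (use s g0p in \<open>auto simp: abs_of_pos less_imp_le\<close>)
  have pkeq: "pk g0 = {x. g0 x = M}" unfolding pk_def snM ..
  have pkcl: "closed (pk g0)" unfolding pkeq
    by (rule closed_Collect_eq[OF g0c continuous_on_const])
  have pkcpt: "compact (pk g0)" using compact_Int_closed[OF cpt pkcl] by simp
  have pkne: "pk g0 \<noteq> {}" using pkeq M_def by auto
  obtain p where p: "p \<in> pk g0" "\<And>y. y \<in> pk g0 \<Longrightarrow> f y \<le> f p"
    using continuous_attains_sup[OF pkcpt pkne continuous_on_subset[OF fc]] by auto
  have gp: "g0 p = M" using p pkeq by auto
  have Sp: "Sup (f ` pk g0) = f p"
    by (rule cSup_eq_maximum) (use p in auto)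
  define c where "c = inverse (f p)"
  have cpos: "c > 0" using fp c_def by auto
  define h where "h = (\<lambda>n::nat. \<lambda>x. inverse (real n * inverse (g0 x) + inverse (f x)))"
  define a where "a = (\<lambda>n::nat. inverse (supnorm (h n)) - real n * inverse M)"
  obtain B where B: "\<And>x. f x \<le> B"
    using continuous_attains_sup[OF cpt _ fc] by auto
  have hpos: "h n x > 0" for n x using g0p[of x] fp[of x] unfolding h_def
    by (simp add: add_nonneg_pos)
  have hle: "h n x \<le> B" for n x
  proof -
    have "inverse (f x) \<le> real n * inverse (g0 x) + inverse (f x)"
      using g0p[of x] by simp
    hence "h n x \<le> inverse (inverse (f x))" unfolding h_def
      using fp[of x] by (intro le_imp_inverse_le) auto
    thus ?thesis using B[of x] by simp
  qed
  have bdd: "bdd_above (range (\<lambda>x. \<bar>h n x\<bar>))" for n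
    using hle hpos by (intro bdd_aboveI[of _ B]) (auto simp: abs_of_pos)
  have snh: "supnorm (h n) = (SUP x. h n x)" for n
    unfolding supnorm_def using hpos by (simp add: abs_of_pos)
  have bdd2: "bdd_above (range (h n))" for n
    using hle by (intro bdd_aboveI[of _ B]) auto
  have up: "a n \<le> c" for n
  proof -
    have "h n p \<le> supnorm (h n)" unfolding snh by (rule cSUP_upper[OF _ bdd2]) auto
    hence "inverse (supnorm (h n)) \<le> inverse (h n p)"
      using hpos by (intro le_imp_inverse_le) auto
    also have "\<dots> = real n * inverse M + c" unfolding h_def c_def gp by simp
    finally show ?thesis unfolding a_def by simp
  qed
  have low: "\<exists>N. \<forall>n\<ge>N. a n \<ge> c - e" if e: "0 < e" "e < c" for e
  proof -
    define S where "S = {x. inverse (c - e) \<le> f x}"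
    have Scl: "closed S" unfolding S_def
      by (rule closed_Collect_le[OF continuous_on_const fc])
    have Scpt: "compact S" using compact_Int_closed[OF cpt Scl] by simp
    have key: "\<exists>N. \<forall>n\<ge>N. \<forall>x\<in>S. real n * (inverse (g0 x) - inverse M) \<ge> c"
    proof (cases "S = {}")
      case True thus ?thesis by auto
    next
      case False
      have cu: "continuous_on S (\<lambda>x. inverse (g0 x) - inverse M)"
        using g0p by (intro continuous_intros continuous_on_subset[OF g0c]) (auto simp: less_imp_neq[symmetric])
      obtain q where q: "q \<in> S" "\<And>y. y \<in> S \<Longrightarrow> inverse (g0 q) - inverse M \<le> inverse (g0 y) - inverse M"
        using continuous_attains_inf[OF Scpt False cu] by auto
      define d where "d = inverse (g0 q) - inverse M"
      have "g0 q \<le> M" using s M_def by auto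
      hence d0: "d \<ge> 0" unfolding d_def using g0p[of q] by (simp add: le_imp_inverse_le)
      have "d \<noteq> 0"
      proof
        assume "d = 0"
        hence "g0 q = M" unfolding d_def by simp
        hence "q \<in> pk g0" using pkeq by auto
        hence "f q \<le> f p" using p by auto
        moreover have "inverse (c - e) \<le> f q" using q S_def by auto
        moreover have "inverse (c - e) > f p"
        proof -
          have "c - e < c" using e by simp
          hence "inverse c < inverse (c - e)" using e by (intro less_imp_inverse_less) auto
          thus ?thesis unfolding c_def using fp[of p] by simp
        qed
        ultimately show False by simp
      qed
      hence dpos: "d > 0" using d0 by simp
      obtain N :: nat where N: "c / d \<le> real N" using real_arch_simple by blast
      show ?thesis
      proof (intro exI allI impI ballI)
        fix n x assume n: "N \<le> n" and x: "x \<in> S"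
        have "c \<le> real N * d" using N dpos by (simp add: divide_le_eq)
        also have "\<dots> \<le> real n * d" using n dpos by (simp add: mult_right_mono)
        also have "\<dots> \<le> real n * (inverse (g0 x) - inverse M)"
          using q(2)[OF x] d_def by (simp add: mult_left_mono)
        finally show "c \<le> real n * (inverse (g0 x) - inverse M)" .
      qed
    qed
    then obtain N where N: "\<And>n x. n \<ge> N \<Longrightarrow> x \<in> S \<Longrightarrow> real n * (inverse (g0 x) - inverse M) \<ge> c"
      by blast
    have uge: "inverse (g0 x) - inverse M \<ge> 0" for x
      using s[of x] g0p[of x] M_def by (simp add: le_imp_inverse_le)
    show ?thesis
    proof (intro exI allI impI)
      fix n assume n: "N \<le> n"
      have pt: "real n * (inverse (g0 x) - inverse M) + inverse (f x) \<ge> c - e" for x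
      proof (cases "x \<in> S")
        case True
        have "c \<le> real n * (inverse (g0 x) - inverse M)" using N[OF n True] .
        moreover have "inverse (f x) > 0" using fp[of x] by simp
        ultimately show ?thesis using e by linarith
      next
        case False
        hence "f x < inverse (c - e)" unfolding S_def by simp
        hence "inverse (inverse (c - e)) < inverse (f x)"
          using fp[of x] by (intro less_imp_inverse_less) auto
        hence "c - e < inverse (f x)" by simp
        moreover have "real n * (inverse (g0 x) - inverse M) \<ge> 0" using uge by simp
        ultimately show ?thesis by linarith
      qed
      define L where "L = real n * inverse M + (c - e)"
      have Lpos: "L > 0" unfolding L_def using e Mpos by (simp add: add_nonneg_pos)
      have "supnorm (h n) \<le> inverse L" unfolding snh
      proof (rule cSUP_least)
        fix x
        have "L \<le> real n * inverse (g0 x) + inverse (f x)"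
          using pt[of x] unfolding L_def by (simp add: algebra_simps)
        thus "h n x \<le> inverse L" unfolding h_def using Lpos by (intro le_imp_inverse_le) auto
      qed auto
      hence "inverse (inverse L) \<le> inverse (supnorm (h n))"
        using hpos[of n] snh
        by (intro le_imp_inverse_le) (auto intro: less_le_trans[OF _ cSUP_upper[OF _ bdd2]])
      thus "c - e \<le> a n" unfolding a_def L_def by simp
    qed
  qed
  have lim: "a \<longlonglongrightarrow> c"
  proof (rule tendstoI)
    fix e :: real assume e: "e > 0"
    define e' where "e' = min (e/2) (c/2)"
    have e': "0 < e'" "e' < c" "e' < e" using e cpos by (auto simp: e'_def)
    obtain N where N: "\<And>n. n \<ge> N \<Longrightarrow> a n \<ge> c - e'" using low[OF e'(1,2)] by blast
    show "\<forall>\<^sub>F n in sequentially. dist (a n) c < e"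
      unfolding eventually_sequentially
    proof (intro exI[of _ N] allI impI)
      fix n assume "N \<le> n"
      hence "c - e' \<le> a n" "a n \<le> c" using N up by auto
      thus "dist (a n) c < e" using e' by (simp add: dist_real_def abs_if)
    qed
  qed
  have "(\<lambda>n. inverse (a n)) \<longlonglongrightarrow> inverse c"
    using tendsto_inverse[OF lim] cpos by simp
  moreover have "inverse c = Sup (f ` pk g0)" using Sp c_def by simp
  ultimately show ?thesis unfolding a_def h_def snM by simp
qed

end
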